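(* Let $p,q$ be positive integers with $\frac1p+\frac1q=\frac12$ and let $M$ be a $\{p,q\}$-map. Then the sum $I_v^b$ of the curvatures of the exterior vertices of $M$ satisfies $I_v^b\ge p$.
   Context: A map is a finite, connected, simply connected 2-complex embedded in the plane; degree of a vertex = number of oriented edges starting there (loops count twice), degree of a face = length of its boundary path. Exterior vertices are those on the boundary path of $M$. A $(p,q)$-map: every interior face has degree $\ge p$ and every interior vertex degree $\ge q$. A $\{p,q\}$-map is a $(p,q)$-map in which every face has degree at least $p$ and less than $2p$ and every vertex has degree less than $2q$. The curvature of a vertex $o$ is $\frac pq(q-d(o))-\mu(o)$, where $\mu(o)$ is the number of times the boundary path of $M$ passes through $o$. *)

theory Defs
  imports Complex_Main
begin

text \<open>
A map is encoded by a connected plane graph (the 1-skeleton) given as a combinatorial map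
(rotation system): a finite set of darts (oriented edges) D, a vertex set V, the tail
(starting vertex) of each dart, the dart reversal involution rv (fixed-point free, so every
edge, including loops, gives two darts), and the rotation sigma that cyclically permutes the
darts starting at each vertex. The face boundary paths are the orbits of
phi d = sigma (rv d). Genus 0 (planarity) is expressed by Euler's formula.
One face orbit, outer, is the boundary path of M (the unbounded region); all other face
orbits are the 2-cells (faces) of M. The one-vertex map has no darts; its boundary path is
the trivial path.
\<close>

definition dorbit :: "('d \<Rightarrow> 'd) \<Rightarrow> 'd \<Rightarrow> 'd set" where
  "dorbit f x = {(f ^^ n) x | n. True}"

definition face_step :: "('d \<Rightarrow> 'd) \<Rightarrow> ('d \<Rightarrow> 'd) \<Rightarrow> 'd \<Rightarrow> 'd" where
  "face_step rv sigma d = sigma (rv d)"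

definition map_faces_all :: "'d set \<Rightarrow> ('d \<Rightarrow> 'd) \<Rightarrow> ('d \<Rightarrow> 'd) \<Rightarrow> 'd set set" where
  "map_faces_all D rv sigma = dorbit (face_step rv sigma) ` D"

definition is_plane_map ::
  "'d set \<Rightarrow> 'v set \<Rightarrow> ('d \<Rightarrow> 'v) \<Rightarrow> ('d \<Rightarrow> 'd) \<Rightarrow> ('d \<Rightarrow> 'd) \<Rightarrow> 'd set \<Rightarrow> bool" where
  "is_plane_map D V tail rv sigma outer \<longleftrightarrow>
     finite D \<and> finite V \<and>
     (\<forall>d\<in>D. rv d \<in> D \<and> rv d \<noteq> d \<and> rv (rv d) = d) \<and>
     bij_betw sigma D D \<and>
     (\<forall>d\<in>D. tail (sigma d) = tail d) \<and>
     (\<forall>d\<in>D. \<forall>e\<in>D. tail e = tail d \<longrightarrow> e \<in> dorbit sigma d) \<and>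
     tail ` D \<subseteq> V \<and>
     (D \<noteq> {} \<longrightarrow> V = tail ` D) \<and>
     (D = {} \<longrightarrow> card V = 1) \<and>
     (\<forall>d\<in>D. \<forall>e\<in>D. (\<lambda>x y. y = sigma x \<or> y = rv x)\<^sup>*\<^sup>* d e) \<and>
     (D \<noteq> {} \<longrightarrow>
        2 * int (card V) - int (card D) + 2 * int (card (map_faces_all D rv sigma)) = 4) \<and>
     (D \<noteq> {} \<longrightarrow> outer \<in> map_faces_all D rv sigma) \<and>
     (D = {} \<longrightarrow> outer = {})"

definition map_faces :: "'d set \<Rightarrow> ('d \<Rightarrow> 'd) \<Rightarrow> ('d \<Rightarrow> 'd) \<Rightarrow> 'd set \<Rightarrow> 'd set set" where
  "map_faces D rv sigma outer = map_faces_all D rv sigma - {outer}"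

definition face_degree :: "'d set \<Rightarrow> nat" where
  "face_degree F = card F"

text \<open>Degree of a vertex = number of oriented edges starting there (loops count twice).\<close>
definition vdeg :: "'d set \<Rightarrow> ('d \<Rightarrow> 'v) \<Rightarrow> 'v \<Rightarrow> nat" where
  "vdeg D tail v = card {d\<in>D. tail d = v}"

definition bmult :: "'d set \<Rightarrow> ('d \<Rightarrow> 'v) \<Rightarrow> 'v \<Rightarrow> nat" where
  "bmult outer tail v = card {d\<in>outer. tail d = v}"

definition ext_vertices :: "'d set \<Rightarrow> 'v set \<Rightarrow> ('d \<Rightarrow> 'v) \<Rightarrow> 'd set \<Rightarrow> 'v set" where
  "ext_vertices D V tail outer = (if D = {} then V else tail ` outer)"

definition curvature :: "nat \<Rightarrow> nat \<Rightarrow> 'd set \<Rightarrow> ('d \<Rightarrow> 'v) \<Rightarrow> 'd set \<Rightarrow> 'v \<Rightarrow> real" where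
  "curvature p q D tail outer v =
     real p / real q * (real q - real (vdeg D tail v)) - real (bmult outer tail v)"

definition is_pq_map ::
  "nat \<Rightarrow> nat \<Rightarrow> 'd set \<Rightarrow> 'v set \<Rightarrow> ('d \<Rightarrow> 'v) \<Rightarrow> ('d \<Rightarrow> 'd) \<Rightarrow> ('d \<Rightarrow> 'd) \<Rightarrow> 'd set \<Rightarrow> bool" where
  "is_pq_map p q D V tail rv sigma outer \<longleftrightarrow>
     is_plane_map D V tail rv sigma outer \<and>
     (\<forall>F\<in>map_faces D rv sigma outer.
        tail ` F \<inter> ext_vertices D V tail outer = {} \<longrightarrow> face_degree F \<ge> p) \<and>
     (\<forall>v\<in>V - ext_vertices D V tail outer. vdeg D tail v \<ge> q)"

definition is_braces_pq_map ::
  "nat \<Rightarrow> nat \<Rightarrow> 'd set \<Rightarrow> 'v set \<Rightarrow> ('d \<Rightarrow> 'v) \<Rightarrow> ('d \<Rightarrow> 'd) \<Rightarrow> ('d \<Rightarrow> 'd) \<Rightarrow> 'd set \<Rightarrow> bool" where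
  "is_braces_pq_map p q D V tail rv sigma outer \<longleftrightarrow>
     is_pq_map p q D V tail rv sigma outer \<and>
     (\<forall>F\<in>map_faces D rv sigma outer. p \<le> face_degree F \<and> face_degree F < 2 * p) \<and>
     (\<forall>v\<in>V. vdeg D tail v < 2 * q)"

end

theory Submission
  imports Defs
begin

lemma funpow_in: "f ` D \<subseteq> D \<Longrightarrow> x \<in> D \<Longrightarrow> (f ^^ n) x \<in> D"
  by (induction n) auto

lemma dorbit_sub:
  assumes "f ` D \<subseteq> D" "x \<in> D" shows "dorbit f x \<subseteq> D"
proof
  fix y assume "y \<in> dorbit f x"
  then obtain n where "y = (f ^^ n) x" unfolding dorbit_def by blast
  then show "y \<in> D" using funpow_in[OF assms, of n] by simp
qed

lemma dorbit_self: "x \<in> dorbit f x"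
proof -
  have "x = (f ^^ 0) x" by simp
  then show ?thesis unfolding dorbit_def by blast
qed

lemma inj_funpow: "inj_on f D \<Longrightarrow> f ` D \<subseteq> D \<Longrightarrow> inj_on (f ^^ n) D"
proof (induction n)
  case 0 then show ?case by simp
next
  case (Suc n)
  have "(f ^^ n) ` D \<subseteq> D" using funpow_in[OF Suc.prems(2)] by blast
  then have "inj_on f ((f ^^ n) ` D)" using Suc.prems(1) by (rule inj_on_subset[rotated])
  then show ?case using Suc comp_inj_on[of "f ^^ n" D f] by (simp add: o_def)
qed

lemma period:
  assumes "finite D" "inj_on f D" "f ` D \<subseteq> D" "x \<in> D"
  shows "\<exists>k>0. (f ^^ k) x = x"
proof -
  let ?g = "\<lambda>n. (f ^^ n) x"
  have "?g ` {..card D} \<subseteq> D" using funpow_in[OF assms(3,4)] by blast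
  then have "card (?g ` {..card D}) \<le> card D" using assms(1) by (simp add: card_mono)
  have "\<not> inj_on ?g {..card D}"
  proof
    assume "inj_on ?g {..card D}"
    then have "card (?g ` {..card D}) = Suc (card D)" by (simp add: card_image)
    then show False using \<open>card (?g ` {..card D}) \<le> card D\<close> by simp
  qed
  then obtain i j where ij: "i \<le> card D" "j \<le> card D" "i \<noteq> j" "?g i = ?g j"
    unfolding inj_on_def by auto
  obtain a b where ab: "a < b" "?g a = ?g b"
  proof (cases "i < j")
    case True then show ?thesis using that[of i j] ij by simp
  next
    case False then have "j < i" using ij(3) by simp
    then show ?thesis using that[of j i] ij by simp
  qed
  have "?g b = (f ^^ (a + (b - a))) x" using ab(1) by simp
  also have "\<dots> = (f ^^ a) ((f ^^ (b - a)) x)" by (simp only: funpow_add o_apply)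
  finally have "?g b = (f ^^ a) ((f ^^ (b - a)) x)" .
  have eq: "(f ^^ a) ((f ^^ (b - a)) x) = (f ^^ a) x"
    by (rule sym[OF trans[OF ab(2) \<open>?g b = (f ^^ a) ((f ^^ (b - a)) x)\<close>]])
  have mem: "(f ^^ (b - a)) x \<in> D" using funpow_in[OF assms(3,4)] .
  have fx: "(f ^^ (b - a)) x = x"
    by (rule inj_onD[OF inj_funpow[OF assms(2,3), of a] eq mem assms(4)])
  have pos: "b - a > 0" using ab(1) by simp
  show ?thesis by (rule exI[of _ "b - a"], rule conjI[OF pos fx])
qed

lemma funpow_period: "(f ^^ k) x = x \<Longrightarrow> (f ^^ (k * m)) x = x"
proof (induction m)
  case 0 then show ?case by simp
next
  case (Suc m)
  have "(f ^^ (k * Suc m)) x = (f ^^ k) ((f ^^ (k * m)) x)"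
    by (simp add: funpow_add)
  then show ?case using Suc by simp
qed

lemma orbit_sym:
  assumes "finite D" "inj_on f D" "f ` D \<subseteq> D" "x \<in> D" "y \<in> dorbit f x"
  shows "x \<in> dorbit f y"
proof -
  obtain k where k: "k > 0" "(f ^^ k) x = x" using period[OF assms(1-4)] by blast
  obtain m where m: "y = (f ^^ m) x" using assms(5) unfolding dorbit_def by blast
  have le: "m \<le> k * m" using k(1) by simp
  have "(f ^^ (k * m - m)) y = (f ^^ (k * m - m + m)) x"
    using m by (simp add: funpow_add)
  also have "\<dots> = x" using le funpow_period[OF k(2)] by simp
  finally show ?thesis unfolding dorbit_def by blast
qed

lemma orbit_trans: "y \<in> dorbit f x \<Longrightarrow> dorbit f y \<subseteq> dorbit f x"
proof
  fix z assume "y \<in> dorbit f x" "z \<in> dorbit f y"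
  then obtain m n where "y = (f ^^ m) x" "z = (f ^^ n) y" unfolding dorbit_def by blast
  then have "z = (f ^^ (n + m)) x" by (simp add: funpow_add)
  then show "z \<in> dorbit f x" unfolding dorbit_def by blast
qed

lemma orbit_eq:
  assumes "finite D" "inj_on f D" "f ` D \<subseteq> D" "x \<in> D" "y \<in> dorbit f x"
  shows "dorbit f y = dorbit f x"
  using orbit_trans[OF assms(5)] orbit_trans[OF orbit_sym[OF assms]] by (rule antisym)

lemma orbit_disj:
  assumes "finite D" "inj_on f D" "f ` D \<subseteq> D" "x \<in> D" "y \<in> D"
    and "dorbit f x \<noteq> dorbit f y"
  shows "dorbit f x \<inter> dorbit f y = {}"
proof (rule ccontr)
  assume "dorbit f x \<inter> dorbit f y \<noteq> {}"
  then obtain z where z: "z \<in> dorbit f x" "z \<in> dorbit f y" by blast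
  have "dorbit f z = dorbit f x" by (rule orbit_eq[OF assms(1-4) z(1)])
  moreover have "dorbit f z = dorbit f y" by (rule orbit_eq[OF assms(1-3,5) z(2)])
  ultimately show False using assms(6) by simp
qed

theorem lemma2p12:
  fixes p q :: nat
    and D :: "'d set" and V :: "'v set" and tail :: "'d \<Rightarrow> 'v"
    and rv sigma :: "'d \<Rightarrow> 'd" and outer :: "'d set"
  assumes "p > 0" and "q > 0"
    and "1 / real p + 1 / real q = 1 / 2"
    and "is_braces_pq_map p q D V tail rv sigma outer"
  shows "(\<Sum>w\<in>ext_vertices D V tail outer. curvature p q D tail outer w) \<ge> real p"
proof -
  have pm: "is_plane_map D V tail rv sigma outer" using assms(4)
    unfolding is_braces_pq_map_def is_pq_map_def by (elim conjE)
  have P: "finite D" "finite V" "\<forall>d\<in>D. rv d \<in> D \<and> rv d \<noteq> d \<and> rv (rv d) = d"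
    "bij_betw sigma D D" "tail ` D \<subseteq> V" "D = {} \<longrightarrow> card V = 1"
    "D \<noteq> {} \<longrightarrow>
        2 * int (card V) - int (card D) + 2 * int (card (map_faces_all D rv sigma)) = 4"
    "D \<noteq> {} \<longrightarrow> outer \<in> map_faces_all D rv sigma"
    "D = {} \<longrightarrow> outer = {}"
    using pm unfolding is_plane_map_def apply -
    by ((elim conjE), assumption)+
  have rq: "real p / real q = real p / 2 - 1"
  proof -
    have "1 / real q = 1/2 - 1 / real p" using assms(3) by simp
    have "real p / real q = real p * (1 / real q)" by simp
    also have "\<dots> = real p * (1/2 - 1 / real p)" using \<open>1 / real q = 1/2 - 1 / real p\<close> by simp
    also have "\<dots> = real p / 2 - 1" using assms(1) by (simp add: right_diff_distrib)
    finally show ?thesis .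
  qed
  show ?thesis
  proof (cases "D = {}")
    case True
    then have "card V = 1" "outer = {}" using P by auto
    then obtain v where V: "V = {v}" using card_1_singletonE by blast
    have E: "ext_vertices D V tail outer = {v}" using True V by (simp add: ext_vertices_def)
    have d0: "vdeg D tail v = 0" using True by (simp add: vdeg_def)
    have b0: "bmult outer tail v = 0" using \<open>outer = {}\<close> by (simp add: bmult_def)
    have q0: "real q \<noteq> 0" using assms(2) by simp
    have "curvature p q D tail outer v = real p / real q * real q"
      unfolding curvature_def d0 b0 by simp
    also have "\<dots> = real p" using q0 by simp
    finally show ?thesis using E by simp
  next
    case False
    define f where "f = face_step rv sigma"
    define FA where "FA = map_faces_all D rv sigma"
    define FS where "FS = map_faces D rv sigma outer"
    define E where "E = ext_vertices D V tail outer"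
    have fin: "finite D" "finite V" using P by auto
    have fD: "f ` D \<subseteq> D" using P unfolding f_def face_step_def bij_betw_def by auto
    have finj: "inj_on f D"
    proof (rule inj_onI)
      fix x y assume xy: "x \<in> D" "y \<in> D" "f x = f y"
      have "sigma (rv x) = sigma (rv y)" using xy(3) unfolding f_def face_step_def .
      moreover have "rv x \<in> D" "rv y \<in> D" using P xy by auto
      ultimately have "rv x = rv y" using P unfolding bij_betw_def inj_on_def by blast
      then have "rv (rv x) = rv (rv y)" by simp
      then show "x = y" using P xy by auto
    qed
    have FAdef: "FA = dorbit f ` D" unfolding FA_def f_def map_faces_all_def ..
    have outerFA: "outer \<in> FA" using P False FA_def by auto
    have FSdef: "FS = FA - {outer}" unfolding FS_def FA_def map_faces_def ..
    have finFA: "finite FA" using FAdef fin by simp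
    have UFA: "\<Union>FA = D"
    proof
      show "\<Union>FA \<subseteq> D" unfolding FAdef using dorbit_sub[OF fD] by auto
      show "D \<subseteq> \<Union>FA"
      proof
        fix x assume "x \<in> D"
        then have "dorbit f x \<in> FA" unfolding FAdef by simp
        then show "x \<in> \<Union>FA" using dorbit_self[of x f] by (rule UnionI)
      qed
    qed
    have disj: "pairwise disjnt FA"
    proof (rule pairwiseI)
      fix A B assume "A \<in> FA" "B \<in> FA" "A \<noteq> B"
      then obtain x y where "x \<in> D" "y \<in> D" "A = dorbit f x" "B = dorbit f y"
        unfolding FAdef by blast
      then show "disjnt A B" unfolding disjnt_def
        using orbit_disj[OF fin(1) finj fD] \<open>A \<noteq> B\<close> by simp
    qed
    have finmem: "\<And>F. F \<in> FA \<Longrightarrow> finite F" using UFA fin(1) by (meson Union_upper finite_subset)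
    have cardD: "card D = (\<Sum>F\<in>FA. card F)"
      using card_Union_disjoint[OF disj finmem] UFA by simp
    have outerD: "outer \<subseteq> D" using UFA outerFA by blast
    have sumFS: "(\<Sum>F\<in>FS. card F) = card D - card outer"
      using cardD FSdef sum.remove[OF finFA outerFA, of card] by simp
    have cardFS: "card FS = card FA - 1" using FSdef outerFA finFA by simp
    have degFS: "\<forall>F\<in>FS. p \<le> card F" using assms(4) FS_def
      unfolding is_braces_pq_map_def face_degree_def by blast
    have "p * card FS \<le> (\<Sum>F\<in>FS. card F)"
      using sum_mono[of FS "\<lambda>F. p" card] degFS by (simp add: mult.commute)
    then have ineqF: "real p * (real (card FA) - 1) \<le> real (card D) - real (card outer)"
    proof -
      assume h: "p * card FS \<le> (\<Sum>F\<in>FS. card F)"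
      have "card FA \<ge> 1" using outerFA finFA by (metis card_0_eq empty_iff less_one not_le)
      have "card outer \<le> card D" using outerD fin(1) by (simp add: card_mono)
      have "real (p * card FS) \<le> real (card D - card outer)"
        using h sumFS by (simp only: of_nat_le_iff)
      moreover have "real (card D - card outer) = real (card D) - real (card outer)"
        using \<open>card outer \<le> card D\<close> by (rule of_nat_diff)
      moreover have "real (card FS) = real (card FA) - 1"
        using cardFS \<open>card FA \<ge> 1\<close> by simp
      ultimately show ?thesis by simp
    qed
    have Eeq: "E = tail ` outer" using False unfolding E_def ext_vertices_def by simp
    have EV: "E \<subseteq> V" using Eeq outerD P by blast
    have finE: "finite E" using EV fin(2) finite_subset by blast
    have sumdeg: "(\<Sum>v\<in>V. vdeg D tail v) = card D"
    proof -
      have "(\<Sum>v\<in>V. \<Sum>d\<in>{d\<in>D. tail d = v}. (1::nat)) = (\<Sum>d\<in>D. 1)"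
        using sum.group[OF fin(1) fin(2), of tail "\<lambda>_. 1::nat"] P by blast
      then show ?thesis unfolding vdeg_def by simp
    qed
    have sumb: "(\<Sum>v\<in>E. bmult outer tail v) = card outer"
    proof -
      have fo: "finite outer" using outerD fin(1) finite_subset by blast
      have "(\<Sum>v\<in>E. \<Sum>d\<in>{d\<in>outer. tail d = v}. (1::nat)) = (\<Sum>d\<in>outer. 1)"
        using sum.group[OF fo finE, of tail "\<lambda>_. 1::nat"] Eeq by blast
      then show ?thesis unfolding bmult_def by simp
    qed
    define c where "c = (\<lambda>v. real p / real q * (real q - real (vdeg D tail v)))"
    have int: "\<forall>v\<in>V - E. vdeg D tail v \<ge> q" using assms(4) E_def
      unfolding is_braces_pq_map_def is_pq_map_def by blast
    have intle: "(\<Sum>v\<in>V - E. c v) \<le> 0"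
    proof (rule sum_nonpos)
      fix v assume "v \<in> V - E"
      then have h1: "real q - real (vdeg D tail v) \<le> 0" using int by simp
      have h2: "real p / real q \<ge> 0" by simp
      show "c v \<le> 0" unfolding c_def using mult_nonneg_nonpos[OF h2 h1] .
    qed
    have split: "(\<Sum>v\<in>V. c v) = (\<Sum>v\<in>E. c v) + (\<Sum>v\<in>V - E. c v)"
      using sum.subset_diff[OF EV fin(2), of c] by (simp add: add.commute)
    have sumc: "(\<Sum>v\<in>V. c v) = real p * card V - real p / real q * card D"
    proof -
      have "(\<Sum>v\<in>V. c v) = (\<Sum>v\<in>V. real p / real q * real q)
             - real p / real q * (\<Sum>v\<in>V. real (vdeg D tail v))"
        unfolding c_def by (simp add: sum_subtractf sum_distrib_left right_diff_distrib)
      also have "(\<Sum>v\<in>V. real (vdeg D tail v)) = real (card D)"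
        using sumdeg by (metis of_nat_sum)
      finally show ?thesis using assms(2) by simp
    qed
    have curv: "(\<Sum>w\<in>E. curvature p q D tail outer w) = (\<Sum>v\<in>E. c v) - real (card outer)"
    proof -
      have "(\<Sum>w\<in>E. curvature p q D tail outer w) =
            (\<Sum>v\<in>E. c v) - (\<Sum>v\<in>E. real (bmult outer tail v))"
        unfolding curvature_def c_def by (simp add: sum_subtractf)
      also have "(\<Sum>v\<in>E. real (bmult outer tail v)) = real (card outer)"
        using sumb by (metis of_nat_sum)
      finally show ?thesis .
    qed
    have euler: "2 * real (card V) - real (card D) + 2 * real (card FA) = 4"
    proof -
      have "2 * int (card V) - int (card D) + 2 * int (card FA) = 4"
        using P False FA_def by blast
      then show ?thesis by (metis (mono_tags, opaque_lifting) of_int_of_nat_eq of_int_numeral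
            of_int_add of_int_diff of_int_mult of_int_eq_iff)
    qed
    have "real p * card V = real p * (2 + real (card D) / 2 - real (card FA))"
    proof -
      have "real (card V) = 2 + real (card D) / 2 - real (card FA)" using euler by linarith
      then show ?thesis by simp
    qed
    then have "(\<Sum>w\<in>E. curvature p q D tail outer w) \<ge>
        real p * (2 + real (card D) / 2 - real (card FA)) - (real p / 2 - 1) * card D - card outer"
    proof -
      have "(\<Sum>v\<in>V. c v) = real p * card V - (real p / 2 - 1) * card D"
        using sumc rq by simp
      then show ?thesis using curv split intle \<open>real p * card V = _\<close> by linarith
    qed
    moreover have "real p * (2 + real (card D) / 2 - real (card FA)) - (real p / 2 - 1) * card D
        - card outer = 2 * real p - real p * card FA + card D - card outer"
      by (simp add: algebra_simps)
    moreover have "real p * real (card FA) - real p \<le> real (card D) - real (card outer)"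
      using ineqF by (simp add: right_diff_distrib)
    ultimately have "real p \<le> (\<Sum>w\<in>E. curvature p q D tail outer w)" by linarith
    then show ?thesis unfolding E_def .
  qed
qed

end
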